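(* Fix $x\in\mathbb{C}$. Let $G_1$ and $G_2$ be two graphs of the same order and let $H$ be any graph. Then $G_1\vee H$ and $G_2 \vee H$ are cospectral with respect to $A+xD$ and with respect to $\bar A + x\bar D$ if and only if $G_1$ and $G_2$ are cospectral with respect to $A+xD$ and with respect to $\bar A+x\bar D$.
   Context: Graphs are finite and simple. For a graph, $A$ and $D$ denote its adjacency and (diagonal) degree matrices, and $\bar A$, $\bar D$ denote the adjacency and degree matrices of its complement. Two graphs are cospectral with respect to a matrix type (e.g., $A+xD$) if the corresponding matrices have the same multiset of eigenvalues. The join $G\vee H$ is the disjoint union of $G$ and $H$ together with all edges between a vertex of $G$ and a vertex of $H$. *)

theory Defs
  imports "Jordan_Normal_Form.Matrix" "Jordan_Normal_Form.Char_Poly"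
    "HOL-Computational_Algebra.Polynomial"
begin

text \<open>A finite simple graph of order n: vertex set {0..<n}, edge relation E,
  symmetric and irreflexive on the vertex set (values outside are irrelevant).\<close>
definition simple_graph :: "nat \<Rightarrow> (nat \<Rightarrow> nat \<Rightarrow> bool) \<Rightarrow> bool" where
  "simple_graph n E \<longleftrightarrow> (\<forall>i<n. \<forall>j<n. E i j = E j i) \<and> (\<forall>i<n. \<not> E i i)"

definition compl_graph :: "(nat \<Rightarrow> nat \<Rightarrow> bool) \<Rightarrow> nat \<Rightarrow> nat \<Rightarrow> bool" where
  "compl_graph E i j \<longleftrightarrow> i \<noteq> j \<and> \<not> E i j"

text \<open>Join of G (order n, vertices 0..<n) and H (order m, vertices n..<n+m).\<close>
definition graph_join :: "nat \<Rightarrow> (nat \<Rightarrow> nat \<Rightarrow> bool) \<Rightarrow> (nat \<Rightarrow> nat \<Rightarrow> bool) \<Rightarrow> nat \<Rightarrow> nat \<Rightarrow> bool" where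
  "graph_join n E F i j =
     (if i < n \<and> j < n then E i j
      else if n \<le> i \<and> n \<le> j then F (i - n) (j - n)
      else True)"

definition adj_mat :: "nat \<Rightarrow> (nat \<Rightarrow> nat \<Rightarrow> bool) \<Rightarrow> complex mat" where
  "adj_mat n E = mat n n (\<lambda>(i, j). if E i j then 1 else 0)"

definition degree :: "nat \<Rightarrow> (nat \<Rightarrow> nat \<Rightarrow> bool) \<Rightarrow> nat \<Rightarrow> nat" where
  "degree n E i = card {j. j < n \<and> E i j}"

definition deg_mat :: "nat \<Rightarrow> (nat \<Rightarrow> nat \<Rightarrow> bool) \<Rightarrow> complex mat" where
  "deg_mat n E = mat n n (\<lambda>(i, j). if i = j then of_nat (degree n E i) else 0)"

definition AxD_mat :: "complex \<Rightarrow> nat \<Rightarrow> (nat \<Rightarrow> nat \<Rightarrow> bool) \<Rightarrow> complex mat" where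
  "AxD_mat x n E = adj_mat n E + x \<cdot>\<^sub>m deg_mat n E"

definition spectrum_mset :: "complex mat \<Rightarrow> complex multiset" where
  "spectrum_mset M = proots (char_poly M)"

definition AxD_cospectral :: "complex \<Rightarrow> nat \<Rightarrow> (nat \<Rightarrow> nat \<Rightarrow> bool) \<Rightarrow> (nat \<Rightarrow> nat \<Rightarrow> bool) \<Rightarrow> bool" where
  "AxD_cospectral x n E F \<longleftrightarrow> spectrum_mset (AxD_mat x n E) = spectrum_mset (AxD_mat x n F)"

definition compl_AxD_cospectral :: "complex \<Rightarrow> nat \<Rightarrow> (nat \<Rightarrow> nat \<Rightarrow> bool) \<Rightarrow> (nat \<Rightarrow> nat \<Rightarrow> bool) \<Rightarrow> bool" where
  "compl_AxD_cospectral x n E F \<longleftrightarrow> AxD_cospectral x n (compl_graph E) (compl_graph F)"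

end

theory Submission
  imports Defs
begin


lemma mat_add_minus_cancel': fixes A :: "'a::ab_group_add mat"
  shows "A \<in> carrier_mat r c \<Longrightarrow> C \<in> carrier_mat r c \<Longrightarrow> A + (C - A) = C"
  by (intro eq_matI) auto
lemma mat_minus_add_cancel': fixes A :: "'a::ab_group_add mat"
  shows "A \<in> carrier_mat r c \<Longrightarrow> B \<in> carrier_mat r c \<Longrightarrow> (B - A) + A = B"
  by (intro eq_matI) auto


lemma schur1:
  fixes B :: "'a :: field mat"
  assumes B: "B \<in> carrier_mat n n" and X: "X \<in> carrier_mat n m" and Y: "Y \<in> carrier_mat m n"
    and C: "C \<in> carrier_mat m m" and Bi: "Bi \<in> carrier_mat n n" and inv: "B * Bi = 1\<^sub>m n"
  shows "det (four_block_mat B X Y C) = det B * det (C - Y * Bi * X)"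
proof -
  have BX: "Bi * X \<in> carrier_mat n m" by (rule mult_carrier_mat[OF Bi X])
  have YB: "Y * Bi \<in> carrier_mat m n" by (rule mult_carrier_mat[OF Y Bi])
  have YBX: "Y * Bi * X \<in> carrier_mat m m" by (rule mult_carrier_mat[OF YB X])
  have CY: "C - Y * Bi * X \<in> carrier_mat m m" using YBX by (rule minus_carrier_mat)
  have p: "four_block_mat B (0\<^sub>m n m) Y (1\<^sub>m m) *
     four_block_mat (1\<^sub>m n) (Bi * X) (0\<^sub>m m n) (C - Y * Bi * X)
     = four_block_mat (B * 1\<^sub>m n + 0\<^sub>m n m * 0\<^sub>m m n) (B * (Bi * X) + 0\<^sub>m n m * (C - Y * Bi * X))
        (Y * 1\<^sub>m n + 1\<^sub>m m * 0\<^sub>m m n) (Y * (Bi * X) + 1\<^sub>m m * (C - Y * Bi * X))"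
    by (rule mult_four_block_mat[OF B zero_carrier_mat Y one_carrier_mat one_carrier_mat BX zero_carrier_mat CY])
  have e1: "B * 1\<^sub>m n + 0\<^sub>m n m * 0\<^sub>m m n = B"
    unfolding right_mult_one_mat[OF B] left_mult_zero_mat[OF zero_carrier_mat] by (rule right_add_zero_mat[OF B])
  have "B * (Bi * X) = (B * Bi) * X" by (rule assoc_mult_mat[symmetric, OF B Bi X])
  also have "\<dots> = X" unfolding inv by (rule left_mult_one_mat[OF X])
  finally have BBX: "B * (Bi * X) = X" .
  have e2: "B * (Bi * X) + 0\<^sub>m n m * (C - Y * Bi * X) = X"
    unfolding BBX left_mult_zero_mat[OF CY] by (rule right_add_zero_mat[OF X])
  have e3: "Y * 1\<^sub>m n + 1\<^sub>m m * 0\<^sub>m m n = Y"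
    unfolding right_mult_one_mat[OF Y] left_mult_one_mat[OF zero_carrier_mat] by (rule right_add_zero_mat[OF Y])
  have YBX': "Y * (Bi * X) = Y * Bi * X" by (rule assoc_mult_mat[symmetric, OF Y Bi X])
  have e4: "Y * (Bi * X) + 1\<^sub>m m * (C - Y * Bi * X) = C"
    unfolding YBX' left_mult_one_mat[OF CY] by (rule mat_add_minus_cancel'[OF YBX C])
  have eq: "four_block_mat B X Y C = four_block_mat B (0\<^sub>m n m) Y (1\<^sub>m m) *
     four_block_mat (1\<^sub>m n) (Bi * X) (0\<^sub>m m n) (C - Y * Bi * X)"
    unfolding p e1 e2 e3 e4 ..
  have c1: "four_block_mat B (0\<^sub>m n m) Y (1\<^sub>m m) \<in> carrier_mat (n+m) (n+m)"
    by (rule four_block_carrier_mat[OF B one_carrier_mat])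
  have c2: "four_block_mat (1\<^sub>m n) (Bi * X) (0\<^sub>m m n) (C - Y * Bi * X) \<in> carrier_mat (n+m) (n+m)"
    by (rule four_block_carrier_mat[OF one_carrier_mat CY])
  have d1: "det (four_block_mat B (0\<^sub>m n m) Y (1\<^sub>m m)) = det B"
    by (subst det_four_block_mat_upper_right_zero[OF B refl Y one_carrier_mat]) simp
  have d2: "det (four_block_mat (1\<^sub>m n) (Bi * X) (0\<^sub>m m n) (C - Y * Bi * X)) = det (C - Y * Bi * X)"
    by (subst det_four_block_mat_lower_left_zero[OF one_carrier_mat BX refl CY]) simp
  show ?thesis unfolding eq det_mult[OF c1 c2] d1 d2 ..
qed

definition tot :: "nat \<Rightarrow> 'a::comm_ring_1 mat \<Rightarrow> 'a" where
  "tot n P = (\<Sum>i<n. \<Sum>j<n. P $$ (i,j))"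

lemma ones_prod:
  fixes P :: "'a::comm_ring_1 mat"
  assumes P: "P \<in> carrier_mat n n"
  shows "mat r n (\<lambda>_. a) * P * mat n c (\<lambda>_. b) = mat r c (\<lambda>_. a * b * tot n P)"
proof (rule eq_matI)
  fix i j assume i: "i < dim_row (mat r c (\<lambda>_. a * b * tot n P))" and j: "j < dim_col (mat r c (\<lambda>_. a * b * tot n P))"
  have rowAP: "\<And>k. k < n \<Longrightarrow> (mat r n (\<lambda>_. a) * P) $$ (i,k) = a * (\<Sum>l<n. P $$ (l,k))"
    using i P by (auto simp: scalar_prod_def sum_distrib_left atLeast0LessThan intro!: sum.cong)
  have "(mat r n (\<lambda>_. a) * P * mat n c (\<lambda>_. b)) $$ (i,j) = (\<Sum>k<n. (mat r n (\<lambda>_. a) * P) $$ (i,k) * b)"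
    using i j P by (auto simp: scalar_prod_def atLeast0LessThan intro!: sum.cong)
  also have "\<dots> = (\<Sum>k<n. a * (\<Sum>l<n. P $$ (l,k)) * b)" by (rule sum.cong, auto simp: rowAP)
  also have "\<dots> = a * b * (\<Sum>k<n. \<Sum>l<n. P $$ (l,k))"
    by (simp add: sum_distrib_left sum_distrib_right mult_ac)
  also have "(\<Sum>k<n. \<Sum>l<n. P $$ (l,k)) = tot n P" unfolding tot_def by (rule sum.swap)
  finally show "(mat r n (\<lambda>_. a) * P * mat n c (\<lambda>_. b)) $$ (i,j) = mat r c (\<lambda>_. a * b * tot n P) $$ (i,j)"
    using i j by simp
qed (insert P, auto)

lemma schur2:
  fixes B :: "'a :: field mat"
  assumes B: "B \<in> carrier_mat n n" and X: "X \<in> carrier_mat n m" and Y: "Y \<in> carrier_mat m n"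
    and C: "C \<in> carrier_mat m m" and Ci: "Ci \<in> carrier_mat m m" and inv: "Ci * C = 1\<^sub>m m"
  shows "det (four_block_mat B X Y C) = det (B - X * Ci * Y) * det C"
proof -
  have XC: "X * Ci \<in> carrier_mat n m" by (rule mult_carrier_mat[OF X Ci])
  have XCY: "X * Ci * Y \<in> carrier_mat n n" by (rule mult_carrier_mat[OF XC Y])
  have BXCY: "B - X * Ci * Y \<in> carrier_mat n n" using XCY by (rule minus_carrier_mat)
  have p: "four_block_mat (1\<^sub>m n) (X * Ci) (0\<^sub>m m n) (1\<^sub>m m) *
     four_block_mat (B - X * Ci * Y) (0\<^sub>m n m) Y C
     = four_block_mat (1\<^sub>m n * (B - X * Ci * Y) + (X * Ci) * Y) (1\<^sub>m n * 0\<^sub>m n m + (X * Ci) * C)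
        (0\<^sub>m m n * (B - X * Ci * Y) + 1\<^sub>m m * Y) (0\<^sub>m m n * 0\<^sub>m n m + 1\<^sub>m m * C)"
    by (rule mult_four_block_mat[OF one_carrier_mat XC zero_carrier_mat one_carrier_mat BXCY zero_carrier_mat Y C])
  have e1: "1\<^sub>m n * (B - X * Ci * Y) + (X * Ci) * Y = B"
    unfolding left_mult_one_mat[OF BXCY] by (rule mat_minus_add_cancel'[OF XCY B])
  have "(X * Ci) * C = X * (Ci * C)" by (rule assoc_mult_mat[OF X Ci C])
  also have "\<dots> = X" unfolding inv by (rule right_mult_one_mat[OF X])
  finally have XCC: "(X * Ci) * C = X" .
  have e2: "1\<^sub>m n * 0\<^sub>m n m + (X * Ci) * C = X"
    unfolding XCC left_mult_one_mat[OF zero_carrier_mat] by (rule left_add_zero_mat[OF X])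
  have e3: "0\<^sub>m m n * (B - X * Ci * Y) + 1\<^sub>m m * Y = Y"
    unfolding left_mult_zero_mat[OF BXCY] left_mult_one_mat[OF Y] by (rule left_add_zero_mat[OF Y])
  have e4: "0\<^sub>m m n * 0\<^sub>m n m + 1\<^sub>m m * C = C"
    unfolding left_mult_zero_mat[OF zero_carrier_mat] left_mult_one_mat[OF C] by (rule left_add_zero_mat[OF C])
  have eq: "four_block_mat B X Y C = four_block_mat (1\<^sub>m n) (X * Ci) (0\<^sub>m m n) (1\<^sub>m m) *
     four_block_mat (B - X * Ci * Y) (0\<^sub>m n m) Y C"
    unfolding p e1 e2 e3 e4 ..
  have c1: "four_block_mat (1\<^sub>m n) (X * Ci) (0\<^sub>m m n) (1\<^sub>m m) \<in> carrier_mat (n+m) (n+m)"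
    by (rule four_block_carrier_mat[OF one_carrier_mat one_carrier_mat])
  have c2: "four_block_mat (B - X * Ci * Y) (0\<^sub>m n m) Y C \<in> carrier_mat (n+m) (n+m)"
    by (rule four_block_carrier_mat[OF BXCY C])
  have d1: "det (four_block_mat (1\<^sub>m n) (X * Ci) (0\<^sub>m m n) (1\<^sub>m m)) = 1"
    by (subst det_four_block_mat_lower_left_zero[OF one_carrier_mat XC refl one_carrier_mat]) simp
  have d2: "det (four_block_mat (B - X * Ci * Y) (0\<^sub>m n m) Y C) = det (B - X * Ci * Y) * det C"
    by (rule det_four_block_mat_upper_right_zero[OF BXCY refl Y C])
  show ?thesis unfolding eq det_mult[OF c1 c2] d1 d2 by simp
qed

lemma smult_inv_cancel: fixes d :: complex assumes "d \<noteq> 0" shows "(1 / d) \<cdot>\<^sub>m (d \<cdot>\<^sub>m 1\<^sub>m n) = 1\<^sub>m n"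
  by (rule eq_matI) (use assms in simp_all)

definition inv_of :: "complex mat \<Rightarrow> complex mat" where
  "inv_of B = (1 / det B) \<cdot>\<^sub>m Determinant.adj_mat B"

lemma inv_of:
  assumes B: "B \<in> carrier_mat n n" and d: "det B \<noteq> 0"
  shows "inv_of B \<in> carrier_mat n n" "B * inv_of B = 1\<^sub>m n" "inv_of B * B = 1\<^sub>m n"
proof -
  note a = Determinant.adj_mat[OF B]
  show "inv_of B \<in> carrier_mat n n" unfolding inv_of_def using a by auto
  have "B * inv_of B = (1 / det B) \<cdot>\<^sub>m (B * Determinant.adj_mat B)"
    unfolding inv_of_def using a B by (simp add: mult_smult_distrib)
  also have "\<dots> = 1\<^sub>m n" using a(2,3) by (simp add: smult_inv_cancel[OF d])
  finally show "B * inv_of B = 1\<^sub>m n" .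
  have "inv_of B * B = (1 / det B) \<cdot>\<^sub>m (Determinant.adj_mat B * B)"
    unfolding inv_of_def using a B by (simp add: mult_smult_assoc_mat)
  also have "\<dots> = 1\<^sub>m n" using a(2,3) by (simp add: smult_inv_cancel[OF d])
  finally show "inv_of B * B = 1\<^sub>m n" .
qed

lemma tot_one: "tot 1 (1\<^sub>m 1 :: 'a::comm_ring_1 mat) = 1"
  unfolding tot_def by simp

lemma affine_det:
  assumes C: "C \<in> carrier_mat m m" and d: "det C \<noteq> 0"
  shows "det (C + mat m m (\<lambda>_. t)) = det C * (1 + t * tot m (inv_of C))"
proof -
  note I = inv_of[OF C d]
  let ?Q = "four_block_mat C (mat m 1 (\<lambda>_. 1)) (mat 1 m (\<lambda>_. -t)) (1\<^sub>m 1)"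
  have X: "mat m 1 (\<lambda>_. 1) \<in> carrier_mat m 1" by simp
  have Y: "mat 1 m (\<lambda>_. -t) \<in> carrier_mat 1 m" by simp
  have "det ?Q = det (C - mat m 1 (\<lambda>_. 1) * 1\<^sub>m 1 * mat 1 m (\<lambda>_. -t)) * det (1\<^sub>m 1 :: complex mat)"
    by (rule schur2[OF C X Y one_carrier_mat one_carrier_mat], simp)
  also have "mat m 1 (\<lambda>_. 1) * 1\<^sub>m 1 * mat 1 m (\<lambda>_. -t) = mat m m (\<lambda>_. 1 * - t * tot 1 (1\<^sub>m 1 :: complex mat))"
    by (rule ones_prod, simp)
  also have "C - mat m m (\<lambda>_. 1 * - t * tot 1 (1\<^sub>m 1 :: complex mat)) = C + mat m m (\<lambda>_. t)"
    unfolding tot_one by (rule eq_matI) (use C in auto)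
  finally have 1: "det ?Q = det (C + mat m m (\<lambda>_. t))" by simp
  have "det ?Q = det C * det (1\<^sub>m 1 - mat 1 m (\<lambda>_. -t) * inv_of C * mat m 1 (\<lambda>_. 1))"
    by (rule schur1[OF C X Y one_carrier_mat I(1) I(2)])
  also have "mat 1 m (\<lambda>_. -t) * inv_of C * mat m 1 (\<lambda>_. 1) = mat 1 1 (\<lambda>_. - t * 1 * tot m (inv_of C))"
    by (rule ones_prod[OF I(1)])
  also have "1\<^sub>m 1 - mat 1 1 (\<lambda>_. - t * 1 * tot m (inv_of C)) = (1 + t * tot m (inv_of C)) \<cdot>\<^sub>m 1\<^sub>m 1"
    by (rule eq_matI) auto
  finally have 2: "det ?Q = det C * (1 + t * tot m (inv_of C))" by simp
  show ?thesis using 1 2 by simp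
qed

lemma join_det:
  fixes B C :: "complex mat"
  assumes B: "B \<in> carrier_mat n n" and C: "C \<in> carrier_mat m m"
    and dB: "det B \<noteq> 0" and dC: "det C \<noteq> 0"
  shows "det (four_block_mat B (mat n m (\<lambda>_. -1)) (mat m n (\<lambda>_. -1)) C)
    = det B * det C - (det (B + mat n n (\<lambda>_. 1)) - det B) * (det (C + mat m m (\<lambda>_. 1)) - det C)"
proof -
  note IB = inv_of[OF B dB]
  define wB where "wB = tot n (inv_of B)"
  define wC where "wC = tot m (inv_of C)"
  have "det (four_block_mat B (mat n m (\<lambda>_. -1)) (mat m n (\<lambda>_. -1)) C)
     = det B * det (C - mat m n (\<lambda>_. -1) * inv_of B * mat n m (\<lambda>_. -1))"
    by (rule schur1[OF B _ _ C IB(1) IB(2)], auto)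
  also have "mat m n (\<lambda>_. -1) * inv_of B * mat n m (\<lambda>_. -1) = mat m m (\<lambda>_. -1 * -1 * wB)"
    unfolding wB_def by (rule ones_prod[OF IB(1)])
  also have "C - mat m m (\<lambda>_. -1 * -1 * wB) = C + mat m m (\<lambda>_. - wB)"
    by (rule eq_matI) (use C in auto)
  also have "det \<dots> = det C * (1 + - wB * wC)" unfolding wC_def by (rule affine_det[OF C dC])
  finally have 1: "det (four_block_mat B (mat n m (\<lambda>_. -1)) (mat m n (\<lambda>_. -1)) C) = det B * (det C * (1 + - wB * wC))" .
  have 2: "det (B + mat n n (\<lambda>_. 1)) = det B * (1 + 1 * wB)" unfolding wB_def by (rule affine_det[OF B dB])
  have 3: "det (C + mat m m (\<lambda>_. 1)) = det C * (1 + 1 * wC)" unfolding wC_def by (rule affine_det[OF C dC])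
  show ?thesis unfolding 1 2 3 by (simp add: algebra_simps)
qed




lemma poly_char_poly:
  assumes A: "(A :: 'a :: comm_ring_1 mat) \<in> carrier_mat n n"
  shows "poly (char_poly A) k = det (k \<cdot>\<^sub>m 1\<^sub>m n - A)"
  unfolding char_poly_def
  by (rule poly_det_cong[of _ n], insert A, auto simp: char_poly_matrix_def)

lemma AxD_carrier[simp]: "AxD_mat x n E \<in> carrier_mat n n"
  unfolding AxD_mat_def adj_mat_def deg_mat_def by auto

lemma AxD_dims[simp]: "dim_row (AxD_mat x n E) = n" "dim_col (AxD_mat x n E) = n"
  unfolding AxD_mat_def adj_mat_def deg_mat_def by auto

lemma AxD_index: "i < n \<Longrightarrow> j < n \<Longrightarrow> AxD_mat x n E $$ (i,j) =
   (if E i j then 1 else 0) + (if i = j then x * of_nat (degree n E i) else 0)"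
  unfolding AxD_mat_def adj_mat_def deg_mat_def by auto

lemma deg_join1: assumes "i < n"
  shows "degree (n+m) (graph_join n E H) i = degree n E i + m"
proof -
  have "{j. j < n + m \<and> graph_join n E H i j} = {j. j < n \<and> E i j} \<union> {n..<n+m}"
    using assms by (auto simp: graph_join_def)
  moreover have "card ({j. j < n \<and> E i j} \<union> {n..<n+m}) = card {j. j < n \<and> E i j} + m"
    by (subst card_Un_disjoint) auto
  ultimately show ?thesis unfolding degree_def by simp
qed

lemma mem_shift: "((j::nat) \<in> (\<lambda>k. k + n) ` S) = (n \<le> j \<and> j - n \<in> S)"
  by (auto simp: image_iff intro!: bexI[of _ "j - n"])

lemma deg_join2: assumes "n \<le> i"
  shows "degree (n+m) (graph_join n E H) i = n + degree m H (i - n)"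
proof -
  have "{j. j < n + m \<and> graph_join n E H i j} = {0..<n} \<union> (\<lambda>j. j + n) ` {j. j < m \<and> H (i - n) j}"
    using assms by (auto simp: graph_join_def mem_shift)
  moreover have "card ({0..<n} \<union> (\<lambda>j. j + n) ` {j. j < m \<and> H (i - n) j}) = n + card {j. j < m \<and> H (i - n) j}"
    by (subst card_Un_disjoint) (auto simp: card_image inj_on_def)
  ultimately show ?thesis unfolding degree_def by simp
qed

lemma deg_cjoin1: assumes "i < n"
  shows "degree (n+m) (compl_graph (graph_join n E H)) i = degree n (compl_graph E) i"
proof -
  have "{j. j < n + m \<and> compl_graph (graph_join n E H) i j} = {j. j < n \<and> compl_graph E i j}"
    using assms by (auto simp: graph_join_def compl_graph_def)
  then show ?thesis unfolding degree_def by simp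
qed

lemma deg_cjoin2: assumes "n \<le> i"
  shows "degree (n+m) (compl_graph (graph_join n E H)) i = degree m (compl_graph H) (i - n)"
proof -
  have "{j. j < n + m \<and> compl_graph (graph_join n E H) i j} = (\<lambda>j. j + n) ` {j. j < m \<and> compl_graph H (i - n) j}"
    using assms by (auto simp: graph_join_def compl_graph_def mem_shift)
  then show ?thesis unfolding degree_def by (simp add: card_image inj_on_def)
qed

lemma deg_compl: assumes "simple_graph n E" "i < n"
  shows "of_nat (degree n (compl_graph E) i) = (of_nat n - 1 - of_nat (degree n E i) :: complex)"
proof -
  have nE: "\<not> E i i" using assms unfolding simple_graph_def by auto
  have "{j. j < n \<and> compl_graph E i j} = {0..<n} - insert i {j. j < n \<and> E i j}"
    by (auto simp: compl_graph_def)
  moreover have "card ({0..<n} - insert i {j. j < n \<and> E i j}) = n - Suc (card {j. j < n \<and> E i j})"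
    using nE assms(2) by (subst card_Diff_subset) auto
  moreover have "Suc (card {j. j < n \<and> E i j}) \<le> n"
  proof -
    have "card (insert i {j. j < n \<and> E i j}) \<le> card {0..<n}" using assms(2) by (intro card_mono) auto
    then show ?thesis using nE by simp
  qed
  ultimately show ?thesis unfolding degree_def by (simp add: of_nat_diff)
qed

lemma join_charmat:
  "l \<cdot>\<^sub>m 1\<^sub>m (n+m) - AxD_mat x (n+m) (graph_join n E H) =
   four_block_mat ((l - x * of_nat m) \<cdot>\<^sub>m 1\<^sub>m n - AxD_mat x n E) (mat n m (\<lambda>_. -1))
     (mat m n (\<lambda>_. -1)) ((l - x * of_nat n) \<cdot>\<^sub>m 1\<^sub>m m - AxD_mat x m H)"
proof (rule eq_matI)
  fix i j assume i: "i < dim_row (four_block_mat ((l - x * of_nat m) \<cdot>\<^sub>m 1\<^sub>m n - AxD_mat x n E) (mat n m (\<lambda>_. -1))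
     (mat m n (\<lambda>_. -1)) ((l - x * of_nat n) \<cdot>\<^sub>m 1\<^sub>m m - AxD_mat x m H))"
    and j: "j < dim_col (four_block_mat ((l - x * of_nat m) \<cdot>\<^sub>m 1\<^sub>m n - AxD_mat x n E) (mat n m (\<lambda>_. -1))
     (mat m n (\<lambda>_. -1)) ((l - x * of_nat n) \<cdot>\<^sub>m 1\<^sub>m m - AxD_mat x m H))"
  then have i': "i < n + m" and j': "j < n + m" by auto
  show "(l \<cdot>\<^sub>m 1\<^sub>m (n+m) - AxD_mat x (n+m) (graph_join n E H)) $$ (i,j) =
    four_block_mat ((l - x * of_nat m) \<cdot>\<^sub>m 1\<^sub>m n - AxD_mat x n E) (mat n m (\<lambda>_. -1))
     (mat m n (\<lambda>_. -1)) ((l - x * of_nat n) \<cdot>\<^sub>m 1\<^sub>m m - AxD_mat x m H) $$ (i,j)"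
  proof (cases "i < n")
    case True
    then show ?thesis
      using i' j' by (cases "j < n"; simp add: AxD_index deg_join1 graph_join_def; simp add: algebra_simps)
  next
    case False
    then have ii: "i - n < m" using i' by auto
    show ?thesis
    proof (cases "j < n")
      case True
      then show ?thesis using False i' j' by (auto simp: AxD_index graph_join_def)
    next
      case False2: False
      then have jj: "j - n < m" using j' by auto
      have eqij: "(i - n = j - n) = (i = j)" using False False2 by auto
      show ?thesis using False False2 i' j' ii jj
        by (simp add: AxD_index deg_join2 graph_join_def eqij; simp add: algebra_simps)
    qed
  qed
qed auto

lemma cjoin_mat:
  "AxD_mat x (n+m) (compl_graph (graph_join n E H)) =
   four_block_mat (AxD_mat x n (compl_graph E)) (0\<^sub>m n m) (0\<^sub>m m n) (AxD_mat x m (compl_graph H))"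
proof (rule eq_matI)
  fix i j assume "i < dim_row (four_block_mat (AxD_mat x n (compl_graph E)) (0\<^sub>m n m) (0\<^sub>m m n) (AxD_mat x m (compl_graph H)))"
    and "j < dim_col (four_block_mat (AxD_mat x n (compl_graph E)) (0\<^sub>m n m) (0\<^sub>m m n) (AxD_mat x m (compl_graph H)))"
  then have i': "i < n + m" and j': "j < n + m" by auto
  show "AxD_mat x (n+m) (compl_graph (graph_join n E H)) $$ (i,j) =
   four_block_mat (AxD_mat x n (compl_graph E)) (0\<^sub>m n m) (0\<^sub>m m n) (AxD_mat x m (compl_graph H)) $$ (i,j)"
  proof (cases "i < n")
    case True
    then show ?thesis
      using i' j' by (cases "j < n") (auto simp: AxD_index deg_cjoin1 graph_join_def compl_graph_def)
  next
    case False
    then have ii: "i - n < m" using i' by auto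
    show ?thesis
    proof (cases "j < n")
      case True
      then show ?thesis using False i' j' by (auto simp: AxD_index graph_join_def compl_graph_def)
    next
      case False2: False
      then have jj: "j - n < m" using j' by auto
      have eqij: "(i - n = j - n) = (i = j)" using False False2 by auto
      show ?thesis using False False2 i' j' ii jj
        by (auto simp: AxD_index deg_cjoin2 graph_join_def compl_graph_def eqij)
    qed
  qed
qed auto

lemma compl_charmat:
  assumes "simple_graph n E"
  shows "mu \<cdot>\<^sub>m 1\<^sub>m n - AxD_mat x n (compl_graph E) =
    (-1) \<cdot>\<^sub>m ((x * (of_nat n - 1) - 1 - mu) \<cdot>\<^sub>m 1\<^sub>m n - AxD_mat x n E + mat n n (\<lambda>_. 1))"
proof (rule eq_matI)
  fix i j assume "i < dim_row ((-1) \<cdot>\<^sub>m ((x * (of_nat n - 1) - 1 - mu) \<cdot>\<^sub>m 1\<^sub>m n - AxD_mat x n E + mat n n (\<lambda>_. 1)))"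
    "j < dim_col ((-1) \<cdot>\<^sub>m ((x * (of_nat n - 1) - 1 - mu) \<cdot>\<^sub>m 1\<^sub>m n - AxD_mat x n E + mat n n (\<lambda>_. 1)))"
  then have i: "i < n" and j: "j < n" by auto
  have nE: "\<not> E i i" using assms i unfolding simple_graph_def by auto
  show "(mu \<cdot>\<^sub>m 1\<^sub>m n - AxD_mat x n (compl_graph E)) $$ (i,j) =
    ((-1) \<cdot>\<^sub>m ((x * (of_nat n - 1) - 1 - mu) \<cdot>\<^sub>m 1\<^sub>m n - AxD_mat x n E + mat n n (\<lambda>_. 1))) $$ (i,j)"
    using i j nE apply (simp add: AxD_index deg_compl[OF assms] compl_graph_def)
    by (auto simp: algebra_simps)
qed auto




lemma proots_lin: "proots (\<Prod>a\<leftarrow>as. [:- a, 1:]) = mset (as :: complex list)"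
proof (induction as)
  case (Cons a as)
  have e: "(\<Prod>b\<leftarrow>a#as. [:-b,1:]) = [:-a,1:] * (\<Prod>b\<leftarrow>as. [:-b,1:])"
    by (simp only: list.map prod_list.Cons)
  have nz: "(\<Prod>b\<leftarrow>as. [:-b,1:]) \<noteq> (0 :: complex poly)"
    by (simp only: prod_list_zero_iff) auto
  have nz1: "[:-a,1:] \<noteq> (0 :: complex poly)" by simp
  show ?case unfolding e proots_mult[OF nz1 nz] Cons proots_linear_factor by simp
qed simp

lemma char_poly_proots:
  fixes A :: "complex mat" assumes A: "A \<in> carrier_mat n n"
  shows "char_poly A = prod_mset (image_mset (\<lambda>a. [:-a, 1:]) (proots (char_poly A)))"
proof -
  obtain as where cp: "char_poly A = (\<Prod>a\<leftarrow>as. [:- a, 1:])" using char_poly_factorized[OF A] by blast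
  have pr: "proots (char_poly A) = mset as"
    unfolding cp by (rule proots_lin)
  show ?thesis unfolding pr
    by (simp add: cp prod_mset_prod_list[symmetric])
qed

lemma spec_iff:
  fixes A B :: "complex mat" assumes A: "A \<in> carrier_mat n n" and B: "B \<in> carrier_mat n n"
  shows "spectrum_mset A = spectrum_mset B \<longleftrightarrow> (\<forall>l. det (l \<cdot>\<^sub>m 1\<^sub>m n - A) = det (l \<cdot>\<^sub>m 1\<^sub>m n - B))"
proof
  assume "spectrum_mset A = spectrum_mset B"
  then have "char_poly A = char_poly B" unfolding spectrum_mset_def
    using char_poly_proots[OF A] char_poly_proots[OF B] by metis
  then show "\<forall>l. det (l \<cdot>\<^sub>m 1\<^sub>m n - A) = det (l \<cdot>\<^sub>m 1\<^sub>m n - B)"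
    using poly_char_poly[OF A] poly_char_poly[OF B] by metis
next
  assume "\<forall>l. det (l \<cdot>\<^sub>m 1\<^sub>m n - A) = det (l \<cdot>\<^sub>m 1\<^sub>m n - B)"
  then have "poly (char_poly A) = poly (char_poly B)"
    using poly_char_poly[OF A] poly_char_poly[OF B] by auto
  then show "spectrum_mset A = spectrum_mset B" unfolding spectrum_mset_def poly_eq_poly_eq_iff by simp
qed

lemma char_poly_nz: assumes A: "(A :: complex mat) \<in> carrier_mat n n" shows "char_poly A \<noteq> 0"
  using degree_monic_char_poly[OF A] by auto

lemma roots_finite:
  fixes A :: "complex mat" assumes A: "A \<in> carrier_mat n n"
  shows "finite {l. det (l \<cdot>\<^sub>m 1\<^sub>m n - A) = 0}"
  using poly_roots_finite[OF char_poly_nz[OF A]] poly_char_poly[OF A] by simp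

lemma cofinite_eq:
  fixes A B :: "complex mat" assumes A: "A \<in> carrier_mat n n" and B: "B \<in> carrier_mat n n"
    and F: "finite F" and eq: "\<And>l. l \<notin> F \<Longrightarrow> det (l \<cdot>\<^sub>m 1\<^sub>m n - A) = det (l \<cdot>\<^sub>m 1\<^sub>m n - B)"
  shows "det (l \<cdot>\<^sub>m 1\<^sub>m n - A) = det (l \<cdot>\<^sub>m 1\<^sub>m n - B)"
proof -
  let ?p = "char_poly A - char_poly B"
  have "?p = 0"
  proof (rule ccontr)
    assume "?p \<noteq> 0"
    then have "finite {l. poly ?p l = 0}" by (rule poly_roots_finite)
    moreover have "UNIV - F \<subseteq> {l. poly ?p l = 0}"
      using eq poly_char_poly[OF A] poly_char_poly[OF B] by auto
    ultimately have "finite (UNIV - F)" by (rule finite_subset[rotated])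
    then have "finite (UNIV :: complex set)" using F by (metis Diff_cancel Diff_eq_empty_iff finite_Diff2 finite_UnI Un_Diff_cancel2 sup_top_left)
    then show False using infinite_UNIV_char_0 by auto
  qed
  then show ?thesis using poly_char_poly[OF A] poly_char_poly[OF B] by (metis eq_iff_diff_eq_0)
qed

lemma shift_finite:
  fixes a :: complex assumes "finite {z. P z}" shows "finite {l. P (l - a)}"
proof -
  have "{l. P (l - a)} = (\<lambda>z. z + a) ` {z. P z}" by (auto simp: image_iff) (metis diff_add_cancel)
  then show ?thesis using assms by simp
qed




definition chi :: "complex mat \<Rightarrow> nat \<Rightarrow> complex \<Rightarrow> complex" where
  "chi M n v = det (v \<cdot>\<^sub>m 1\<^sub>m n - M + mat n n (\<lambda>_. 1))"

lemma chi_roots_finite: assumes M: "M \<in> carrier_mat n n" shows "finite {v. chi M n v = 0}"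
proof -
  have "\<And>v. v \<cdot>\<^sub>m 1\<^sub>m n - M + mat n n (\<lambda>_. 1) = v \<cdot>\<^sub>m 1\<^sub>m n - (M - mat n n (\<lambda>_. 1))"
    by (rule eq_matI) (use M in auto)
  moreover have "M - mat n n (\<lambda>_. 1) \<in> carrier_mat n n" by (rule minus_carrier_mat) simp
  ultimately show ?thesis unfolding chi_def by (simp only: roots_finite)
qed

lemma compl_det:
  assumes s: "simple_graph n E"
  shows "det (mu \<cdot>\<^sub>m 1\<^sub>m n - AxD_mat x n (compl_graph E)) = (-1)^n * chi (AxD_mat x n E) n (x * (of_nat n - 1) - 1 - mu)"
proof -
  have "dim_col ((x * (of_nat n - 1) - 1 - mu) \<cdot>\<^sub>m 1\<^sub>m n - AxD_mat x n E + mat n n (\<lambda>_. 1)) = n" by simp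
  then show ?thesis unfolding compl_charmat[OF s] det_smult chi_def by (simp only:)
qed

lemma compl_iff:
  assumes s1: "simple_graph n E1" and s2: "simple_graph n E2"
  shows "compl_AxD_cospectral x n E1 E2 \<longleftrightarrow> (\<forall>v. chi (AxD_mat x n E1) n v = chi (AxD_mat x n E2) n v)"
proof -
  define c where "c = x * (of_nat n - 1) - 1"
  have "compl_AxD_cospectral x n E1 E2 \<longleftrightarrow> (\<forall>mu. (-1)^n * chi (AxD_mat x n E1) n (c - mu) = (-1)^n * chi (AxD_mat x n E2) n (c - mu))"
    unfolding compl_AxD_cospectral_def AxD_cospectral_def spec_iff[OF AxD_carrier AxD_carrier]
      compl_det[OF s1] compl_det[OF s2] c_def ..
  also have "\<dots> \<longleftrightarrow> (\<forall>mu. chi (AxD_mat x n E1) n (c - mu) = chi (AxD_mat x n E2) n (c - mu))"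
    by (simp only: mult_cancel_left power_eq_0_iff) simp
  also have "\<dots> \<longleftrightarrow> (\<forall>v. chi (AxD_mat x n E1) n v = chi (AxD_mat x n E2) n v)"
  proof
    assume h: "\<forall>mu. chi (AxD_mat x n E1) n (c - mu) = chi (AxD_mat x n E2) n (c - mu)"
    show "\<forall>v. chi (AxD_mat x n E1) n v = chi (AxD_mat x n E2) n v"
    proof
      fix v
      have "chi (AxD_mat x n E1) n (c - (c - v)) = chi (AxD_mat x n E2) n (c - (c - v))" using h by blast
      then show "chi (AxD_mat x n E1) n v = chi (AxD_mat x n E2) n v" by simp
    qed
  qed simp
  finally show ?thesis .
qed

lemma blockdiag_char:
  fixes A D :: "complex mat"
  assumes A: "A \<in> carrier_mat n n" and D: "D \<in> carrier_mat m m"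
  shows "det (l \<cdot>\<^sub>m 1\<^sub>m (n+m) - four_block_mat A (0\<^sub>m n m) (0\<^sub>m m n) D) = det (l \<cdot>\<^sub>m 1\<^sub>m n - A) * det (l \<cdot>\<^sub>m 1\<^sub>m m - D)"
proof -
  have "l \<cdot>\<^sub>m 1\<^sub>m (n+m) - four_block_mat A (0\<^sub>m n m) (0\<^sub>m m n) D =
     four_block_mat (l \<cdot>\<^sub>m 1\<^sub>m n - A) (0\<^sub>m n m) (0\<^sub>m m n) (l \<cdot>\<^sub>m 1\<^sub>m m - D)"
    by (rule eq_matI) (use A D in auto)
  moreover have a1: "l \<cdot>\<^sub>m 1\<^sub>m n - A \<in> carrier_mat n n" using A by (rule minus_carrier_mat)
  moreover have a4: "l \<cdot>\<^sub>m 1\<^sub>m m - D \<in> carrier_mat m m" using D by (rule minus_carrier_mat)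
  moreover have "det (four_block_mat (l \<cdot>\<^sub>m 1\<^sub>m n - A) (0\<^sub>m n m) (0\<^sub>m m n) (l \<cdot>\<^sub>m 1\<^sub>m m - D)) = det (l \<cdot>\<^sub>m 1\<^sub>m n - A) * det (l \<cdot>\<^sub>m 1\<^sub>m m - D)"
    by (rule det_four_block_mat_upper_right_zero[OF a1 refl zero_carrier_mat a4])
  ultimately show ?thesis by simp
qed

lemma join_compl_iff:
  "compl_AxD_cospectral x (n+m) (graph_join n E1 H) (graph_join n E2 H) \<longleftrightarrow> compl_AxD_cospectral x n E1 E2"
proof -
  let ?A1 = "AxD_mat x n (compl_graph E1)" and ?A2 = "AxD_mat x n (compl_graph E2)"
    and ?K = "AxD_mat x m (compl_graph H)"
  have e: "\<And>E. det (l \<cdot>\<^sub>m 1\<^sub>m (n+m) - AxD_mat x (n+m) (compl_graph (graph_join n E H))) =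
     det (l \<cdot>\<^sub>m 1\<^sub>m n - AxD_mat x n (compl_graph E)) * det (l \<cdot>\<^sub>m 1\<^sub>m m - ?K)" for l
    unfolding cjoin_mat by (rule blockdiag_char[OF AxD_carrier AxD_carrier])
  have "compl_AxD_cospectral x (n+m) (graph_join n E1 H) (graph_join n E2 H) \<longleftrightarrow>
    (\<forall>l. det (l \<cdot>\<^sub>m 1\<^sub>m n - ?A1) * det (l \<cdot>\<^sub>m 1\<^sub>m m - ?K) = det (l \<cdot>\<^sub>m 1\<^sub>m n - ?A2) * det (l \<cdot>\<^sub>m 1\<^sub>m m - ?K))"
    unfolding compl_AxD_cospectral_def AxD_cospectral_def spec_iff[OF AxD_carrier AxD_carrier] e ..
  also have "\<dots> \<longleftrightarrow> (\<forall>l. det (l \<cdot>\<^sub>m 1\<^sub>m n - ?A1) = det (l \<cdot>\<^sub>m 1\<^sub>m n - ?A2))"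
  proof
    assume h: "\<forall>l. det (l \<cdot>\<^sub>m 1\<^sub>m n - ?A1) * det (l \<cdot>\<^sub>m 1\<^sub>m m - ?K) = det (l \<cdot>\<^sub>m 1\<^sub>m n - ?A2) * det (l \<cdot>\<^sub>m 1\<^sub>m m - ?K)"
    show "\<forall>l. det (l \<cdot>\<^sub>m 1\<^sub>m n - ?A1) = det (l \<cdot>\<^sub>m 1\<^sub>m n - ?A2)"
    proof
      fix l show "det (l \<cdot>\<^sub>m 1\<^sub>m n - ?A1) = det (l \<cdot>\<^sub>m 1\<^sub>m n - ?A2)"
      proof (rule cofinite_eq[OF AxD_carrier AxD_carrier roots_finite[OF AxD_carrier[of x m "compl_graph H"]]])
        fix l' assume "l' \<notin> {l. det (l \<cdot>\<^sub>m 1\<^sub>m m - ?K) = 0}"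
        then have nz: "det (l' \<cdot>\<^sub>m 1\<^sub>m m - ?K) \<noteq> 0" by blast
        from h have "det (l' \<cdot>\<^sub>m 1\<^sub>m n - ?A1) * det (l' \<cdot>\<^sub>m 1\<^sub>m m - ?K) = det (l' \<cdot>\<^sub>m 1\<^sub>m n - ?A2) * det (l' \<cdot>\<^sub>m 1\<^sub>m m - ?K)" by blast
        then show "det (l' \<cdot>\<^sub>m 1\<^sub>m n - ?A1) = det (l' \<cdot>\<^sub>m 1\<^sub>m n - ?A2)"
          using nz by (rule mult_right_cancel[THEN iffD1, rotated])
      qed
    qed
  next
    assume h: "\<forall>l. det (l \<cdot>\<^sub>m 1\<^sub>m n - ?A1) = det (l \<cdot>\<^sub>m 1\<^sub>m n - ?A2)"
    then show "\<forall>l. det (l \<cdot>\<^sub>m 1\<^sub>m n - ?A1) * det (l \<cdot>\<^sub>m 1\<^sub>m m - ?K) = det (l \<cdot>\<^sub>m 1\<^sub>m n - ?A2) * det (l \<cdot>\<^sub>m 1\<^sub>m m - ?K)"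
      by simp
  qed
  also have "\<dots> \<longleftrightarrow> compl_AxD_cospectral x n E1 E2"
    unfolding compl_AxD_cospectral_def AxD_cospectral_def spec_iff[OF AxD_carrier AxD_carrier] ..
  finally show ?thesis .
qed




lemma join_formula:
  assumes dB: "det ((l - x * of_nat m) \<cdot>\<^sub>m 1\<^sub>m n - AxD_mat x n E) \<noteq> 0"
    and dC: "det ((l - x * of_nat n) \<cdot>\<^sub>m 1\<^sub>m m - AxD_mat x m H) \<noteq> 0"
  shows "det (l \<cdot>\<^sub>m 1\<^sub>m (n+m) - AxD_mat x (n+m) (graph_join n E H)) =
    det ((l - x * of_nat m) \<cdot>\<^sub>m 1\<^sub>m n - AxD_mat x n E) * det ((l - x * of_nat n) \<cdot>\<^sub>m 1\<^sub>m m - AxD_mat x m H)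
    - (chi (AxD_mat x n E) n (l - x * of_nat m) - det ((l - x * of_nat m) \<cdot>\<^sub>m 1\<^sub>m n - AxD_mat x n E))
    * (chi (AxD_mat x m H) m (l - x * of_nat n) - det ((l - x * of_nat n) \<cdot>\<^sub>m 1\<^sub>m m - AxD_mat x m H))"
proof -
  have B: "(l - x * of_nat m) \<cdot>\<^sub>m 1\<^sub>m n - AxD_mat x n E \<in> carrier_mat n n" by (rule minus_carrier_mat) simp
  have C: "(l - x * of_nat n) \<cdot>\<^sub>m 1\<^sub>m m - AxD_mat x m H \<in> carrier_mat m m" by (rule minus_carrier_mat) simp
  show ?thesis unfolding join_charmat join_det[OF B C dB dC] chi_def ..
qed

lemma join_iff:
  assumes hc: "\<forall>v. chi (AxD_mat x n E1) n v = chi (AxD_mat x n E2) n v"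
  shows "AxD_cospectral x (n+m) (graph_join n E1 H) (graph_join n E2 H) \<longleftrightarrow> AxD_cospectral x n E1 E2"
proof -
  define a where "a = x * of_nat m"
  define b where "b = x * of_nat n"
  define p1 where "p1 z = det (z \<cdot>\<^sub>m 1\<^sub>m n - AxD_mat x n E1)" for z
  define p2 where "p2 z = det (z \<cdot>\<^sub>m 1\<^sub>m n - AxD_mat x n E2)" for z
  define q where "q z = det (z \<cdot>\<^sub>m 1\<^sub>m m - AxD_mat x m H)" for z
  define k where "k z = chi (AxD_mat x m H) m z" for z
  define N1 where "N1 l = det (l \<cdot>\<^sub>m 1\<^sub>m (n+m) - AxD_mat x (n+m) (graph_join n E1 H))" for l
  define N2 where "N2 l = det (l \<cdot>\<^sub>m 1\<^sub>m (n+m) - AxD_mat x (n+m) (graph_join n E2 H))" for l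
  have key: "N1 l - N2 l = (p1 (l - a) - p2 (l - a)) * k (l - b)"
    if "p1 (l - a) \<noteq> 0" "p2 (l - a) \<noteq> 0" "q (l - b) \<noteq> 0" for l
  proof -
    have f1: "N1 l = p1 (l - a) * q (l - b) - (chi (AxD_mat x n E1) n (l - a) - p1 (l - a)) * (k (l - b) - q (l - b))"
      unfolding N1_def p1_def q_def k_def a_def b_def
      by (rule join_formula) (use that in \<open>auto simp: p1_def q_def a_def b_def\<close>)
    have f2: "N2 l = p2 (l - a) * q (l - b) - (chi (AxD_mat x n E2) n (l - a) - p2 (l - a)) * (k (l - b) - q (l - b))"
      unfolding N2_def p2_def q_def k_def a_def b_def
      by (rule join_formula) (use that in \<open>auto simp: p2_def q_def a_def b_def\<close>)
    have c: "chi (AxD_mat x n E1) n (l - a) = chi (AxD_mat x n E2) n (l - a)" using hc by blast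
    show ?thesis unfolding f1 f2 c by (simp add: algebra_simps)
  qed
  have fp1: "finite {z. p1 z = 0}" unfolding p1_def by (rule roots_finite[OF AxD_carrier])
  have fp2: "finite {z. p2 z = 0}" unfolding p2_def by (rule roots_finite[OF AxD_carrier])
  have fq: "finite {z. q z = 0}" unfolding q_def by (rule roots_finite[OF AxD_carrier])
  have fk: "finite {z. k z = 0}" unfolding k_def by (rule chi_roots_finite[OF AxD_carrier])
  have c1: "AxD_cospectral x (n+m) (graph_join n E1 H) (graph_join n E2 H) \<longleftrightarrow> (\<forall>l. N1 l = N2 l)"
    unfolding AxD_cospectral_def N1_def N2_def by (rule spec_iff[OF AxD_carrier AxD_carrier])
  have c2: "AxD_cospectral x n E1 E2 \<longleftrightarrow> (\<forall>z. p1 z = p2 z)"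
    unfolding AxD_cospectral_def p1_def p2_def by (rule spec_iff[OF AxD_carrier AxD_carrier])
  show ?thesis unfolding c1 c2
  proof
    assume h: "\<forall>l. N1 l = N2 l"
    let ?F = "{z. p1 z = 0} \<union> {z. p2 z = 0} \<union> {z. q (z - (b - a)) = 0} \<union> {z. k (z - (b - a)) = 0}"
    have F: "finite ?F" using fp1 fp2 shift_finite[OF fq] shift_finite[OF fk] by blast
    show "\<forall>z. p1 z = p2 z"
    proof
      fix z
      show "p1 z = p2 z" unfolding p1_def p2_def
      proof (rule cofinite_eq[OF AxD_carrier AxD_carrier F])
        fix z' assume z': "z' \<notin> ?F"
        define l where "l = z' + a"
        have la: "l - a = z'" and lb: "l - b = z' - (b - a)" unfolding l_def by simp_all
        have "N1 l - N2 l = (p1 (l - a) - p2 (l - a)) * k (l - b)"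
          by (rule key) (use z' in \<open>auto simp: la lb\<close>)
        then have "(p1 z' - p2 z') * k (z' - (b - a)) = 0" using h unfolding la lb by simp
        then show "det (z' \<cdot>\<^sub>m 1\<^sub>m n - AxD_mat x n E1) = det (z' \<cdot>\<^sub>m 1\<^sub>m n - AxD_mat x n E2)"
          using z' unfolding p1_def p2_def by simp
      qed
    qed
  next
    assume h: "\<forall>z. p1 z = p2 z"
    let ?F = "{l. p1 (l - a) = 0} \<union> {l. p2 (l - a) = 0} \<union> {l. q (l - b) = 0}"
    have F: "finite ?F" using shift_finite[OF fp1] shift_finite[OF fp2] shift_finite[OF fq] by blast
    show "\<forall>l. N1 l = N2 l"
    proof
      fix l
      show "N1 l = N2 l" unfolding N1_def N2_def
      proof (rule cofinite_eq[OF AxD_carrier AxD_carrier F])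
        fix l' assume l': "l' \<notin> ?F"
        have "N1 l' - N2 l' = (p1 (l' - a) - p2 (l' - a)) * k (l' - b)"
          by (rule key) (use l' in auto)
        then show "det (l' \<cdot>\<^sub>m 1\<^sub>m (n+m) - AxD_mat x (n+m) (graph_join n E1 H)) =
            det (l' \<cdot>\<^sub>m 1\<^sub>m (n+m) - AxD_mat x (n+m) (graph_join n E2 H))"
          using h unfolding N1_def N2_def by simp
      qed
    qed
  qed
qed

theorem theorem3p2:
  fixes x :: complex and n m :: nat and E1 E2 H :: "nat \<Rightarrow> nat \<Rightarrow> bool"
  assumes "simple_graph n E1" and "simple_graph n E2" and "simple_graph m H"
  shows "(AxD_cospectral x (n + m) (graph_join n E1 H) (graph_join n E2 H) \<and>
          compl_AxD_cospectral x (n + m) (graph_join n E1 H) (graph_join n E2 H))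
     \<longleftrightarrow> (AxD_cospectral x n E1 E2 \<and> compl_AxD_cospectral x n E1 E2)"
  using join_compl_iff[of x n m E1 H E2] compl_iff[OF assms(1,2), of x] join_iff[of x n E1 E2 m H]
  by blast


end
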